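(* Let $H=\sum_{j=1}^{N_H}h_j\sigma_j$ and all notation be as in the context, let $N_T\ge1$ be an integer and $\tau>0$. Define $$C=\int_{\mathbb{R}}dt\,e^{-\frac{N_T^2t^2}{2\tau^2}}\big(\|f(t,\cdot)\|_{TV}\big)^{N_T},\qquad |\psi\rangle=\frac{\tau\sqrt{2\pi}}{C\,N_T}\,e^{-\frac12(H-E_g)^2\tau^2}|\Psi_0\rangle,$$ and $$c(\tau)=\int_{\mathbb{R}}du\,e^{-\frac{u^2}{2}}\Big(2e^{\frac{h_{tot}\tau}{N_T}|u|}-1-2\frac{h_{tot}\tau}{N_T}|u|\Big)^{N_T}.$$ Then $\langle\psi|\psi\rangle\ge \dfrac{2\pi p_g}{c(\tau)^2}$. Moreover, when $N_T>4h_{tot}^2\tau^2$, $c(\tau)\le\sqrt{\dfrac{2\pi}{1-4h_{tot}^2\tau^2/N_T}}$.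
   Context: $H=\sum_{j=1}^{N_H}h_j\sigma_j$ acts on $n$ qubits, with $\sigma_j$ Pauli operators (tensor products of single-qubit Paulis), $h_j\in\mathbb{R}$, and $h_{tot}=\sum_j|h_j|$. $E_g$ is the smallest eigenvalue of $H$, $|\Psi_g\rangle$ a corresponding normalised eigenvector, $|\Psi_0\rangle$ a normalised state, and $p_g=|\langle\Psi_g|\Psi_0\rangle|^2$. Notation: $\mathcal{L}_k=\{\vec l=(l_1,\dots,l_k):l_q\in\{1,\dots,N_H\}\}$; $m(\vec l,j)=\sum_{q=1}^k\delta_{l_q,j}$; $S(\vec l)=\sigma_{l_k}\cdots\sigma_{l_1}$; $T(\vec l)=\sigma_{N_H}^{m(\vec l,N_H)}\cdots\sigma_1^{m(\vec l,1)}$; $a(\vec l)=\mathrm{Tr}[S(\vec l)T(\vec l)^\dagger]/\mathrm{Tr}(\mathbb{1})\in\{\pm1\}$. For $t\in\mathbb{R}$, $f(t,\cdot)$ is the complex measure on $\mathbb{R}^{N_H}$ $$f(t,\cdot)=\delta_{(h_1t,\dots,h_{N_H}t)}+\sum_{k=2}^\infty\sum_{\vec l\in\mathcal{L}_k}\frac{\prod_{q=1}^k(-ih_{l_q}t)}{k!}\big[a(\vec l)-1\big]\Big(\prod_{j=1}^{N_H}i^{m(\vec l,j)}\Big)\,\delta_{(m(\vec l,1)\pi/2,\dots,m(\vec l,N_H)\pi/2)},$$ where $\delta_y$ is the Dirac point mass at $y$, and $\|f(t,\cdot)\|_{TV}=\int|f(t,\omega)|d\omega$ denotes its total variation. (In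 the paper, $|\psi\rangle$ is the random-circuit variational state built from the Hamiltonian ansatz and the prior guiding function $\prod_i f(t,\omega_i)$, and $C$ is its normalisation constant.) *)

theory Defs
  imports "HOL-Analysis.Analysis" "Jordan_Normal_Form.Char_Poly"
begin

(* Single-qubit Paulis: 0 = I, 1 = X, 2 = Y, 3 = Z *)
definition pauli1 :: "nat \<Rightarrow> complex mat" where
  "pauli1 a = (if a = 1 then mat_of_rows_list 2 [[0,1],[1,0]]
               else if a = 2 then mat_of_rows_list 2 [[0,-\<i>],[\<i>,0]]
               else if a = 3 then mat_of_rows_list 2 [[1,0],[0,-1]]
               else mat_of_rows_list 2 [[1,0],[0,1]])"

(* n-qubit Pauli operator (tensor product of single-qubit Paulis) given by a
   Pauli string P : {0..<n} -> {0,1,2,3}; qubit q is bit q of the basis index *)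
definition pauli_mat :: "nat \<Rightarrow> (nat \<Rightarrow> nat) \<Rightarrow> complex mat" where
  "pauli_mat n P = mat (2^n) (2^n)
     (\<lambda>(r,c). \<Prod>q<n. pauli1 (P q) $$ (r div 2^q mod 2, c div 2^q mod 2))"

definition hamiltonian :: "nat \<Rightarrow> nat \<Rightarrow> (nat \<Rightarrow> real) \<Rightarrow> (nat \<Rightarrow> nat \<Rightarrow> nat) \<Rightarrow> complex mat" where
  "hamiltonian n NH h \<sigma> = mat (2^n) (2^n)
     (\<lambda>ij. \<Sum>j\<in>{1..NH}. complex_of_real (h j) * pauli_mat n (\<sigma> j) $$ ij)"

definition htot :: "nat \<Rightarrow> (nat \<Rightarrow> real) \<Rightarrow> real" where
  "htot NH h = (\<Sum>j\<in>{1..NH}. \<bar>h j\<bar>)"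

definition mat_trace :: "complex mat \<Rightarrow> complex" where
  "mat_trace A = (\<Sum>i<dim_row A. A $$ (i,i))"

definition conj_transpose :: "complex mat \<Rightarrow> complex mat" where
  "conj_transpose A = mat (dim_col A) (dim_row A) (\<lambda>(i,j). cnj (A $$ (j,i)))"

definition mult_idx :: "nat list \<Rightarrow> nat \<Rightarrow> nat" where
  "mult_idx l j = count_list l j"

(* S(l) = sigma_{l_k} ... sigma_{l_1}, for l = [l_1,...,l_k] *)
definition S_op :: "nat \<Rightarrow> (nat \<Rightarrow> nat \<Rightarrow> nat) \<Rightarrow> nat list \<Rightarrow> complex mat" where
  "S_op n \<sigma> l = foldl (\<lambda>M j. pauli_mat n (\<sigma> j) * M) (1\<^sub>m (2^n)) l"

(* T(l) = sigma_{NH}^{m(l,NH)} ... sigma_1^{m(l,1)} *)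
definition T_op :: "nat \<Rightarrow> nat \<Rightarrow> (nat \<Rightarrow> nat \<Rightarrow> nat) \<Rightarrow> nat list \<Rightarrow> complex mat" where
  "T_op n NH \<sigma> l = foldl (\<lambda>M j. (pauli_mat n (\<sigma> j) ^\<^sub>m mult_idx l j) * M) (1\<^sub>m (2^n)) [1..<NH+1]"

definition a_coef :: "nat \<Rightarrow> nat \<Rightarrow> (nat \<Rightarrow> nat \<Rightarrow> nat) \<Rightarrow> nat list \<Rightarrow> complex" where
  "a_coef n NH \<sigma> l = mat_trace (S_op n \<sigma> l * conj_transpose (T_op n NH \<sigma> l)) / mat_trace (1\<^sub>m (2^n))"

(* index set L_k, k >= 2, all together *)
definition L_set :: "nat \<Rightarrow> nat list set" where
  "L_set NH = {l. 2 \<le> length l \<and> set l \<subseteq> {1..NH}}"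

definition f_coef :: "nat \<Rightarrow> nat \<Rightarrow> (nat \<Rightarrow> real) \<Rightarrow> (nat \<Rightarrow> nat \<Rightarrow> nat) \<Rightarrow> real \<Rightarrow> nat list \<Rightarrow> complex" where
  "f_coef n NH h \<sigma> t l =
     (\<Prod>q\<leftarrow>l. - \<i> * complex_of_real (h q * t)) / of_nat (fact (length l))
     * (a_coef n NH \<sigma> l - 1) * (\<Prod>j\<in>{1..NH}. \<i> ^ mult_idx l j)"

(* location (m(l,1) pi/2, ..., m(l,NH) pi/2) in R^NH (points as lists of length NH) *)
definition f_point :: "nat \<Rightarrow> nat list \<Rightarrow> real list" where
  "f_point NH l = map (\<lambda>j. real (mult_idx l j) * pi / 2) [1..<NH+1]"

(* the discrete complex measure f(t,.) as its mass function on R^NH *)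
definition f_mass :: "nat \<Rightarrow> nat \<Rightarrow> (nat \<Rightarrow> real) \<Rightarrow> (nat \<Rightarrow> nat \<Rightarrow> nat) \<Rightarrow> real \<Rightarrow> real list \<Rightarrow> complex" where
  "f_mass n NH h \<sigma> t y =
     (if y = map (\<lambda>j. h j * t) [1..<NH+1] then 1 else 0)
     + (\<Sum>\<^sub>\<infinity>l\<in>L_set NH. if f_point NH l = y then f_coef n NH h \<sigma> t l else 0)"

definition f_TV :: "nat \<Rightarrow> nat \<Rightarrow> (nat \<Rightarrow> real) \<Rightarrow> (nat \<Rightarrow> nat \<Rightarrow> nat) \<Rightarrow> real \<Rightarrow> real" where
  "f_TV n NH h \<sigma> t = (\<Sum>\<^sub>\<infinity>y\<in>(UNIV :: real list set). norm (f_mass n NH h \<sigma> t y))"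

definition mat_exp :: "complex mat \<Rightarrow> complex mat" where
  "mat_exp A = mat (dim_row A) (dim_col A)
     (\<lambda>ij. \<Sum>k. (A ^\<^sub>m k) $$ ij / of_nat (fact k))"

definition vnorm2 :: "complex vec \<Rightarrow> real" where
  "vnorm2 v = (\<Sum>i<dim_vec v. (cmod (v $ i))^2)"

definition vinner :: "complex vec \<Rightarrow> complex vec \<Rightarrow> complex" where
  "vinner v w = (\<Sum>i<dim_vec v. cnj (v $ i) * w $ i)"

end

theory Submission
  imports Defs "HOL-Probability.Distributions"
begin


lemma key_ineq:
  fixes x :: real assumes x: "0 \<le> x"
  shows "2 * exp x - 1 - 2 * x \<le> exp (2 * x^2)"
proof -
  define \<phi> where "\<phi> y = exp (2 * y^2) - 2 * exp y + 1 + 2 * y" for y :: real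
  define \<phi>' where "\<phi>' y = 4 * y * exp (2 * y^2) - 2 * exp y + 2" for y :: real
  define \<phi>'' where "\<phi>'' y = (4 + 16 * y^2) * exp (2 * y^2) - 2 * exp y" for y :: real
  have d1: "(\<phi> has_real_derivative \<phi>' y) (at y)" for y
    unfolding \<phi>_def \<phi>'_def by (auto intro!: derivative_eq_intros simp: algebra_simps power2_eq_square)
  have d2: "(\<phi>' has_real_derivative \<phi>'' y) (at y)" for y
    unfolding \<phi>'_def \<phi>''_def by (auto intro!: derivative_eq_intros simp: algebra_simps power2_eq_square)
  have e18: "exp (1/8::real) \<le> 2"
  proof -
    have "exp (1/8::real) \<le> 1 + 1/8 + (1/8)^2" by (rule exp_bound) auto
    then show ?thesis by (simp add: power2_eq_square)
  qed
  have pp: "\<phi>'' y \<ge> 0" for y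
  proof -
    have "y - 1/8 \<le> 2 * y^2" using sum_power2_ge_zero[of "y - 1/4" 0] by (simp add: power2_eq_square algebra_simps)
    hence "exp (y - 1/8) \<le> exp (2*y^2)" by simp
    moreover have "exp y = exp (y - 1/8) * exp (1/8)" by (simp add: exp_add[symmetric])
    ultimately have "exp y \<le> exp (2*y^2) * 2" using e18
      by (metis exp_ge_zero mult_mono)
    moreover have "4 * exp (2*y^2) \<le> (4 + 16 * y^2) * exp (2 * y^2)"
      by (intro mult_right_mono) auto
    ultimately show ?thesis unfolding \<phi>''_def by linarith
  qed
  have "\<phi>' 0 \<le> \<phi>' y" if "0 \<le> y" for y
    using that by (intro DERIV_nonneg_imp_nondecreasing[of 0 y \<phi>']) (use d2 pp in auto)
  hence p1: "\<phi>' y \<ge> 0" if "0 \<le> y" for y using that by (simp add: \<phi>'_def)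
  have "\<phi> 0 \<le> \<phi> x"
    using x by (intro DERIV_nonneg_imp_nondecreasing[of 0 x \<phi>]) (use d1 p1 in auto)
  thus ?thesis by (simp add: \<phi>_def)
qed



lemma gauss:
  fixes s :: real assumes s: "0 < s"
  shows "integrable lborel (\<lambda>u. exp (-(s * u^2) / 2))"
    and "(LINT u|lborel. exp (-(s * u^2) / 2)) = sqrt (2 * pi / s)"
proof -
  define \<sigma> where "\<sigma> = 1 / sqrt s"
  have \<sigma>2: "\<sigma>^2 = 1 / s" using s by (simp add: \<sigma>_def power_divide)
  have nd: "normal_density 0 \<sigma> u = (1 / sqrt (2 * pi / s)) * exp (-(s * u^2) / 2)" for u
    unfolding normal_density_def \<sigma>2 using s by (simp add: field_simps)
  have "integrable lborel (\<lambda>u. sqrt (2 * pi / s) * normal_density 0 \<sigma> u)"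
    using integrable_normal_density[of \<sigma> 0] s \<sigma>_def by (intro integrable_mult_right) simp
  moreover have "(\<lambda>u. sqrt (2 * pi / s) * normal_density 0 \<sigma> u) = (\<lambda>u. exp (-(s * u^2) / 2))"
    using s by (auto simp: nd)
  ultimately show "integrable lborel (\<lambda>u. exp (-(s * u^2) / 2))" by simp
  have "(LINT u|lborel. sqrt (2 * pi / s) * normal_density 0 \<sigma> u) = sqrt (2 * pi / s)"
    using integral_normal_density[of \<sigma> 0] s \<sigma>_def by simp
  thus "(LINT u|lborel. exp (-(s * u^2) / 2)) = sqrt (2 * pi / s)"
    using \<open>(\<lambda>u. sqrt (2 * pi / s) * normal_density 0 \<sigma> u) = _\<close> by simp
qed

lemma cf_meas: "(\<lambda>u::real. exp (-(u^2)/2) * (2 * exp (a * \<bar>u\<bar>) - 1 - 2 * a * \<bar>u\<bar>) ^ N) \<in> borel_measurable lborel"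
  by measurable

lemma cf_bounds:
  fixes x :: real assumes "0 \<le> x"
  shows "1 \<le> 2 * exp x - 1 - 2 * x" "2 * exp x - 1 - 2 * x \<le> 2 * exp x"
proof -
  have "1 + x \<le> exp x" by (rule exp_ge_add_one_self)
  thus "1 \<le> 2 * exp x - 1 - 2 * x" by linarith
  show "2 * exp x - 1 - 2 * x \<le> 2 * exp x" using assms by linarith
qed

lemma cf_integrable:
  fixes a :: real assumes a: "0 \<le> a"
  shows "integrable lborel (\<lambda>u. exp (-(u^2)/2) * (2 * exp (a * \<bar>u\<bar>) - 1 - 2 * a * \<bar>u\<bar>) ^ N)"
proof -
  define b where "b = real N * a"
  have I: "integrable lborel (\<lambda>u. (2^N * exp (b^2)) * exp (-((1/2) * u^2) / 2))"
    using gauss(1)[of "1/2"] by (intro integrable_mult_right) simp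
  have M: "(\<lambda>u::real. exp (-(u^2)/2) * (2 * exp (a * \<bar>u\<bar>) - 1 - 2 * a * \<bar>u\<bar>) ^ N) \<in> borel_measurable lborel"
    by (rule cf_meas)
  have A: "AE u in lborel. norm (exp (-(u^2)/2) * (2 * exp (a * \<bar>u\<bar>) - 1 - 2 * a * \<bar>u\<bar>) ^ N)
        \<le> norm ((2^N * exp (b^2)) * exp (-((1/2) * u^2) / 2))"
  proof (intro AE_I2)
    fix u :: real
    have x0: "0 \<le> a * \<bar>u\<bar>" using a by simp
    note bd = cf_bounds[OF x0]
    have "norm (exp (-(u^2)/2) * (2 * exp (a * \<bar>u\<bar>) - 1 - 2 * a * \<bar>u\<bar>) ^ N)
          = exp (-(u^2)/2) * (2 * exp (a * \<bar>u\<bar>) - 1 - 2 * a * \<bar>u\<bar>) ^ N"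
      using bd(1) by (simp add: abs_mult)
    also have "\<dots> \<le> exp (-(u^2)/2) * (2 * exp (a * \<bar>u\<bar>)) ^ N"
      using bd by (intro mult_left_mono power_mono) auto
    also have "\<dots> = 2^N * exp (-(u^2)/2 + b * \<bar>u\<bar>)"
      by (simp add: power_mult_distrib exp_of_nat_mult[symmetric] mult_exp_exp b_def mult_ac)
    also have "\<dots> \<le> 2^N * exp (b^2 + (-((1/2) * u^2) / 2))"
    proof -
      have "-(u^2)/2 + b * \<bar>u\<bar> \<le> b^2 + (-((1/2) * u^2) / 2)"
        using sum_power2_ge_zero[of "\<bar>u\<bar>/2 - b" 0] by (simp add: power2_eq_square algebra_simps)
      thus ?thesis by simp
    qed
    also have "\<dots> = norm ((2^N * exp (b^2)) * exp (-((1/2) * u^2) / 2))"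
      by (simp only: exp_add) simp
    finally show "norm (exp (-(u^2)/2) * (2 * exp (a * \<bar>u\<bar>) - 1 - 2 * a * \<bar>u\<bar>) ^ N)
        \<le> norm ((2^N * exp (b^2)) * exp (-((1/2) * u^2) / 2))" .
  qed
  show ?thesis by (rule Bochner_Integration.integrable_bound[OF I M A])
qed

lemma c_bound:
  fixes a :: real assumes a: "0 \<le> a" and k: "4 * real N * a^2 < 1"
  shows "(LINT u|lborel. exp (-(u^2)/2) * (2 * exp (a * \<bar>u\<bar>) - 1 - 2 * a * \<bar>u\<bar>) ^ N)
         \<le> sqrt (2 * pi / (1 - 4 * real N * a^2))"
proof -
  define s where "s = 1 - 4 * real N * a^2"
  have s: "0 < s" using k by (simp add: s_def)
  have "(LINT u|lborel. exp (-(u^2)/2) * (2 * exp (a * \<bar>u\<bar>) - 1 - 2 * a * \<bar>u\<bar>) ^ N)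
        \<le> (LINT u|lborel. exp (-(s * u^2) / 2))"
  proof (rule integral_mono[OF cf_integrable[OF a] gauss(1)[OF s]])
    fix u :: real
    have x0: "0 \<le> a * \<bar>u\<bar>" using a by simp
    have "exp (-(u^2)/2) * (2 * exp (a * \<bar>u\<bar>) - 1 - 2 * a * \<bar>u\<bar>) ^ N
          \<le> exp (-(u^2)/2) * (exp (2 * (a * \<bar>u\<bar>)^2)) ^ N"
      using cf_bounds(1)[OF x0] key_ineq[OF x0] by (intro mult_left_mono power_mono) auto
    also have "\<dots> = exp (-(s * u^2) / 2)"
      by (simp add: s_def exp_of_nat_mult[symmetric] mult_exp_exp power_mult_distrib field_simps)
    finally show "exp (-(u^2)/2) * (2 * exp (a * \<bar>u\<bar>) - 1 - 2 * a * \<bar>u\<bar>) ^ N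
          \<le> exp (-(s * u^2) / 2)" .
  qed
  also have "\<dots> = sqrt (2 * pi / s)" by (rule gauss(2)[OF s])
  finally show ?thesis by (simp add: s_def)
qed



lemma pauli1_herm: "x < 2 \<Longrightarrow> y < 2 \<Longrightarrow> cnj (pauli1 a $$ (y,x)) = pauli1 a $$ (x,y)"
  by (auto simp: pauli1_def mat_of_rows_list_def less_2_cases_iff)

lemma pauli1_sq: "x < 2 \<Longrightarrow> y < 2 \<Longrightarrow>
   (\<Sum>b<2. pauli1 a $$ (x,b) * pauli1 a $$ (b,y)) = (if x = y then 1 else 0)"
proof -
  assume "x < 2" "y < 2"
  hence "x \<in> {0,1}" "y \<in> {0,1}" by auto
  thus ?thesis by (auto simp: pauli1_def mat_of_rows_list_def numeral_2_eq_2)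
qed

lemma sum_lessThan_add_split:
  fixes m n :: nat and g :: "nat \<Rightarrow> 'a::comm_monoid_add"
  shows "(\<Sum>k<m+n. g k) = (\<Sum>k<m. g k) + (\<Sum>k<n. g (k+m))"
  by (induction n) (auto simp: ac_simps)

lemma bit_shift_lemma:
  fixes k n q :: nat assumes "k < 2^n" "q < n"
  shows "(k + 2^n) div 2^q mod 2 = k div 2^q mod 2"
proof -
  have "(2::nat)^n = 2^(n-q) * 2^q" using assms(2) by (simp add: power_add[symmetric])
  hence "(k + 2^n) div 2^q = 2^(n-q) + k div 2^q" by simp
  moreover obtain m where "(2::nat)^(n-q) = 2 * m" using assms(2)
    by (metis dvd_def dvd_power zero_less_diff numeral_One one_less_numeral_iff semiring_norm(76))
  ultimately show ?thesis by simp
qed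

lemma bitsum:
  fixes n :: nat and F :: "nat \<Rightarrow> nat \<Rightarrow> 'a::comm_semiring_1"
  shows "(\<Sum>k<(2::nat)^n. \<Prod>q<n. F q (k div 2^q mod 2)) = (\<Prod>q<n. F q 0 + F q 1 :: 'a::comm_semiring_1)"
proof (induction n)
  case 0
  then show ?case by simp
next
  case (Suc n)
  have lo: "(\<Prod>q<Suc n. F q (k div 2^q mod 2)) = (\<Prod>q<n. F q (k div 2^q mod 2)) * F n 0"
    if "k < 2^n" for k using that by simp
  have hi: "(\<Prod>q<Suc n. F q ((k + 2^n) div 2^q mod 2)) = (\<Prod>q<n. F q (k div 2^q mod 2)) * F n 1"
    if "k < 2^n" for k
  proof -
    have "(k + 2^n) div 2^n = 1" using that by simp
    moreover have "(\<Prod>q<n. F q ((k + 2^n) div 2^q mod 2)) = (\<Prod>q<n. F q (k div 2^q mod 2))"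
      using bit_shift_lemma[OF that] by (intro prod.cong) auto
    ultimately show ?thesis by simp
  qed
  have "(\<Sum>k<(2::nat)^Suc n. \<Prod>q<Suc n. F q (k div 2^q mod 2))
     = (\<Sum>k<2^n. \<Prod>q<Suc n. F q (k div 2^q mod 2)) + (\<Sum>k<2^n. \<Prod>q<Suc n. F q ((k + 2^n) div 2^q mod 2))"
    using sum_lessThan_add_split[of "\<lambda>k. \<Prod>q<Suc n. F q (k div 2^q mod 2)" "2^n" "2^n"]
    by (simp add: mult_2 ac_simps)
  also have "\<dots> = (\<Sum>k<2^n. (\<Prod>q<n. F q (k div 2^q mod 2)) * F n 0) + (\<Sum>k<2^n. (\<Prod>q<n. F q (k div 2^q mod 2)) * F n 1)"
    using lo hi by simp
  also have "\<dots> = (\<Prod>q<n. F q 0 + F q 1) * (F n 0 + F n 1)"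
    by (simp add: sum_distrib_right[symmetric] Suc distrib_left)
  finally show ?case by simp
qed

lemma bits_eq:
  fixes r c n :: nat assumes "r < 2^n" "c < 2^n" "\<forall>q<n. r div 2^q mod 2 = c div 2^q mod 2"
  shows "r = c"
proof (rule bit_eqI)
  fix q
  show "bit r q = bit c q"
  proof (cases "q < n")
    case True thus ?thesis using assms(3) by (simp add: bit_iff_odd odd_iff_mod_2_eq_one)
  next
    case False
    hence "(2::nat)^n \<le> 2^q" by simp
    hence "r < 2^q" "c < 2^q" using assms(1,2) by linarith+
    hence "r div 2^q = 0" "c div 2^q = 0" by auto
    thus ?thesis by (simp add: bit_iff_odd)
  qed
qed

lemma pauli_mat_carrier[simp]: "pauli_mat n P \<in> carrier_mat (2^n) (2^n)"
  by (simp add: pauli_mat_def)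

lemma pauli_mat_sq: "pauli_mat n P * pauli_mat n P = 1\<^sub>m (2^n)"
proof (rule eq_matI)
  fix r c assume rc: "r < dim_row (1\<^sub>m (2^n) :: complex mat)" "c < dim_col (1\<^sub>m (2^n) :: complex mat)"
  hence r: "r < 2^n" and c: "c < 2^n" by auto
  have "(pauli_mat n P * pauli_mat n P) $$ (r,c)
      = (\<Sum>k<2^n. (\<Prod>q<n. pauli1 (P q) $$ (r div 2^q mod 2, k div 2^q mod 2)) *
                   (\<Prod>q<n. pauli1 (P q) $$ (k div 2^q mod 2, c div 2^q mod 2)))"
    using r c by (simp add: pauli_mat_def scalar_prod_def atLeast0LessThan)
  also have "\<dots> = (\<Sum>k<2^n. \<Prod>q<n. pauli1 (P q) $$ (r div 2^q mod 2, k div 2^q mod 2) *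
                   pauli1 (P q) $$ (k div 2^q mod 2, c div 2^q mod 2))"
    by (simp add: prod.distrib)
  also have "\<dots> = (\<Prod>q<n. \<Sum>b<2. pauli1 (P q) $$ (r div 2^q mod 2, b) * pauli1 (P q) $$ (b, c div 2^q mod 2))"
    by (subst bitsum) (simp add: numeral_2_eq_2)
  also have "\<dots> = (\<Prod>q<n. if r div 2^q mod 2 = c div 2^q mod 2 then 1 else 0)"
    by (intro prod.cong refl pauli1_sq) auto
  also have "\<dots> = (if r = c then 1 else 0)"
  proof (cases "r = c")
    case True thus ?thesis by simp
  next
    case False
    then obtain q where "q < n" "r div 2^q mod 2 \<noteq> c div 2^q mod 2" using bits_eq[OF r c] by blast
    hence "\<exists>q\<in>{..<n}. (if r div 2^q mod 2 = c div 2^q mod 2 then 1 else 0) = (0::complex)" by auto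
    from prod_zero[OF finite_lessThan this] show ?thesis using False by simp
  qed
  finally show "(pauli_mat n P * pauli_mat n P) $$ (r,c) = 1\<^sub>m (2^n) $$ (r,c)" using r c by simp
qed (auto simp: pauli_mat_def)



lemma pauli_dims[simp]: "dim_row (pauli_mat n P) = 2^n" "dim_col (pauli_mat n P) = 2^n"
  by (simp_all add: pauli_mat_def)
lemma ct_dim[simp]: "dim_row (conj_transpose A) = dim_col A" "dim_col (conj_transpose A) = dim_row A"
  by (simp_all add: conj_transpose_def)

lemma ct_carrier[simp]: "A \<in> carrier_mat nr nc \<Longrightarrow> conj_transpose A \<in> carrier_mat nc nr"
  unfolding carrier_mat_def by simp

lemma ct_index[simp]: "i < dim_col A \<Longrightarrow> j < dim_row A \<Longrightarrow> conj_transpose A $$ (i,j) = cnj (A $$ (j,i))"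
  by (simp add: conj_transpose_def)

lemma ct_ct[simp]: "conj_transpose (conj_transpose A) = A"
  by (rule eq_matI) auto

lemma ct_mult: "A \<in> carrier_mat m k \<Longrightarrow> B \<in> carrier_mat k l \<Longrightarrow>
   conj_transpose (A * B) = conj_transpose B * conj_transpose A"
  by (rule eq_matI) (auto simp: scalar_prod_def mult.commute)

lemma ct_one[simp]: "conj_transpose (1\<^sub>m d) = 1\<^sub>m d"
  by (rule eq_matI) auto

lemma pow_comm: assumes B: "B \<in> carrier_mat d d" shows "B * B ^\<^sub>m m = B ^\<^sub>m m * B"
proof (induction m)
  case 0 thus ?case using B by simp
next
  case (Suc m)
  have Bm: "B ^\<^sub>m m \<in> carrier_mat d d" using B by simp
  have "B * B ^\<^sub>m Suc m = B * (B ^\<^sub>m m * B)" by simp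
  also have "\<dots> = (B * B ^\<^sub>m m) * B" by (rule assoc_mult_mat[OF B Bm B, symmetric])
  also have "\<dots> = B ^\<^sub>m Suc m * B" using Suc by simp
  finally show ?case .
qed

lemma ct_pow: assumes A: "A \<in> carrier_mat d d" shows "conj_transpose (A ^\<^sub>m m) = conj_transpose A ^\<^sub>m m"
proof (induction m)
  case 0 thus ?case using A by simp
next
  case (Suc m)
  have "conj_transpose (A ^\<^sub>m Suc m) = conj_transpose A * conj_transpose (A ^\<^sub>m m)"
    using A by (simp add: ct_mult[of _ d d _ d])
  also have "\<dots> = conj_transpose A * conj_transpose A ^\<^sub>m m" using Suc by simp
  also have "\<dots> = conj_transpose A ^\<^sub>m m * conj_transpose A"
    using pow_comm[OF ct_carrier[OF A]] .
  finally show ?case by simp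
qed

lemma ct_smult: "conj_transpose (c \<cdot>\<^sub>m A) = cnj c \<cdot>\<^sub>m conj_transpose A"
  by (rule eq_matI) auto

lemma ct_minus: "A \<in> carrier_mat nr nc \<Longrightarrow> B \<in> carrier_mat nr nc \<Longrightarrow>
   conj_transpose (A - B) = conj_transpose A - conj_transpose B"
  by (rule eq_matI) auto

lemma pauli_mat_herm: "conj_transpose (pauli_mat n P) = pauli_mat n P"
proof (rule eq_matI)
  fix i j assume "i < dim_row (pauli_mat n P)" "j < dim_col (pauli_mat n P)"
  hence ij: "i < 2^n" "j < 2^n" by (auto simp: pauli_mat_def)
  have "conj_transpose (pauli_mat n P) $$ (i,j) = cnj (pauli_mat n P $$ (j,i))"
    using ij by (simp add: pauli_mat_def)
  also have "\<dots> = (\<Prod>q<n. cnj (pauli1 (P q) $$ (j div 2^q mod 2, i div 2^q mod 2)))"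
    using ij by (simp add: pauli_mat_def)
  also have "\<dots> = (\<Prod>q<n. pauli1 (P q) $$ (i div 2^q mod 2, j div 2^q mod 2))"
    by (intro prod.cong refl pauli1_herm) auto
  also have "\<dots> = pauli_mat n P $$ (i,j)" using ij by (simp add: pauli_mat_def)
  finally show "conj_transpose (pauli_mat n P) $$ (i,j) = pauli_mat n P $$ (i,j)" .
qed (auto simp: pauli_mat_def)

lemma ham_carrier[simp]: "hamiltonian n NH h \<sigma> \<in> carrier_mat (2^n) (2^n)"
  by (simp add: hamiltonian_def)

lemma ham_herm: "conj_transpose (hamiltonian n NH h \<sigma>) = hamiltonian n NH h \<sigma>"
proof (rule eq_matI)
  fix i j assume "i < dim_row (hamiltonian n NH h \<sigma>)" "j < dim_col (hamiltonian n NH h \<sigma>)"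
  hence ij: "i < 2^n" "j < 2^n" by (auto simp: hamiltonian_def)
  have "conj_transpose (hamiltonian n NH h \<sigma>) $$ (i,j)
       = (\<Sum>k\<in>{1..NH}. complex_of_real (h k) * cnj (pauli_mat n (\<sigma> k) $$ (j,i)))"
    using ij by (simp add: hamiltonian_def)
  also have "\<dots> = (\<Sum>k\<in>{1..NH}. complex_of_real (h k) * pauli_mat n (\<sigma> k) $$ (i,j))"
  proof (intro sum.cong refl)
    fix k
    have "cnj (pauli_mat n (\<sigma> k) $$ (j,i)) = conj_transpose (pauli_mat n (\<sigma> k)) $$ (i,j)"
      using ij by simp
    thus "complex_of_real (h k) * cnj (pauli_mat n (\<sigma> k) $$ (j,i)) = complex_of_real (h k) * pauli_mat n (\<sigma> k) $$ (i,j)"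
      by (simp add: pauli_mat_herm)
  qed
  also have "\<dots> = hamiltonian n NH h \<sigma> $$ (i,j)" using ij by (simp add: hamiltonian_def)
  finally show "conj_transpose (hamiltonian n NH h \<sigma>) $$ (i,j) = hamiltonian n NH h \<sigma> $$ (i,j)" .
qed (auto simp: hamiltonian_def)

definition bu :: "nat \<Rightarrow> complex mat \<Rightarrow> bool" where
  "bu d X \<longleftrightarrow> X \<in> carrier_mat d d \<and> X * conj_transpose X = 1\<^sub>m d \<and> conj_transpose X * X = 1\<^sub>m d"

lemma bu_one: "bu d (1\<^sub>m d)" by (simp add: bu_def)

lemma bu_mult: assumes "bu d X" "bu d Y" shows "bu d (X * Y)"
proof -
  have X: "X \<in> carrier_mat d d" and Y: "Y \<in> carrier_mat d d" using assms by (auto simp: bu_def)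
  have cX: "conj_transpose X \<in> carrier_mat d d" and cY: "conj_transpose Y \<in> carrier_mat d d"
    using X Y by auto
  have ct: "conj_transpose (X * Y) = conj_transpose Y * conj_transpose X" using ct_mult[OF X Y] .
  have "X * Y * (conj_transpose Y * conj_transpose X) = X * (Y * (conj_transpose Y * conj_transpose X))"
    by (rule assoc_mult_mat[OF X Y mult_carrier_mat[OF cY cX]])
  also have "Y * (conj_transpose Y * conj_transpose X) = (Y * conj_transpose Y) * conj_transpose X"
    by (rule assoc_mult_mat[OF Y cY cX, symmetric])
  also have "X * (Y * conj_transpose Y * conj_transpose X) = 1\<^sub>m d" using assms X cX by (simp add: bu_def)
  finally have 1: "X * Y * conj_transpose (X * Y) = 1\<^sub>m d" using ct by simp
  have "conj_transpose Y * conj_transpose X * (X * Y) = conj_transpose Y * (conj_transpose X * (X * Y))"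
    by (rule assoc_mult_mat[OF cY cX mult_carrier_mat[OF X Y]])
  also have "conj_transpose X * (X * Y) = (conj_transpose X * X) * Y"
    by (rule assoc_mult_mat[OF cX X Y, symmetric])
  also have "conj_transpose Y * (conj_transpose X * X * Y) = 1\<^sub>m d" using assms Y cY by (simp add: bu_def)
  finally have 2: "conj_transpose (X * Y) * (X * Y) = 1\<^sub>m d" using ct by simp
  show ?thesis using 1 2 X Y by (simp add: bu_def)
qed

lemma bu_ct: assumes "bu d X" shows "bu d (conj_transpose X)"
proof -
  have X: "X \<in> carrier_mat d d" "X * conj_transpose X = 1\<^sub>m d" "conj_transpose X * X = 1\<^sub>m d"
    using assms unfolding bu_def by auto
  have "conj_transpose X \<in> carrier_mat d d" using X(1) by (rule ct_carrier)
  thus ?thesis unfolding bu_def ct_ct using X(2,3) by blast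
qed

lemma bu_dim: "bu d X \<Longrightarrow> dim_row X = d" unfolding bu_def carrier_mat_def by blast

lemma bu_pow: assumes "bu d X" shows "bu d (X ^\<^sub>m m)"
proof (induction m)
  case 0
  have "X ^\<^sub>m 0 = 1\<^sub>m d" using bu_dim[OF assms] by simp
  thus ?case using bu_one by metis
next
  case (Suc m)
  have "X ^\<^sub>m Suc m = X ^\<^sub>m m * X" by simp
  thus ?case using bu_mult[OF Suc assms] by metis
qed

lemma bu_pauli: "bu (2^n) (pauli_mat n P)"
  unfolding bu_def pauli_mat_herm pauli_mat_sq using pauli_mat_carrier by blast

lemma bu_foldl: "(\<And>j. j \<in> set l \<Longrightarrow> bu d (F j)) \<Longrightarrow> bu d M0 \<Longrightarrow> bu d (foldl (\<lambda>M j. F j * M) M0 l)"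
proof (induction l arbitrary: M0)
  case Nil thus ?case by simp
next
  case (Cons j l)
  have "bu d (F j * M0)" using Cons.prems by (intro bu_mult) auto
  hence "bu d (foldl (\<lambda>M j. F j * M) (F j * M0) l)" using Cons.IH Cons.prems(1) by simp
  thus ?case by simp
qed

lemma bu_diag: assumes "bu d U" "i < d" shows "cmod (U $$ (i,i)) \<le> 1"
proof -
  have U: "U \<in> carrier_mat d d" using assms by (simp add: bu_def)
  have "(U * conj_transpose U) $$ (i,i) = (\<Sum>k<d. complex_of_real ((cmod (U $$ (i,k)))^2))"
    using U assms(2) by (simp add: scalar_prod_def atLeast0LessThan complex_norm_square del: of_real_power)
  hence "(\<Sum>k<d. complex_of_real ((cmod (U $$ (i,k)))^2)) = 1" using assms by (simp add: bu_def)
  hence s: "(\<Sum>k<d. (cmod (U $$ (i,k)))^2) = 1"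
    by (metis of_real_eq_1_iff of_real_sum)
  have "(cmod (U $$ (i,i)))^2 \<le> (\<Sum>k<d. (cmod (U $$ (i,k)))^2)"
    using assms(2) by (intro member_le_sum) auto
  hence "(cmod (U $$ (i,i)))^2 \<le> 1" using s by simp
  thus ?thesis by (simp add: power_le_one_iff abs_le_square_iff)
qed

lemma bu_trace: assumes "bu d U" shows "cmod (mat_trace U) \<le> d"
proof -
  have U: "U \<in> carrier_mat d d" using assms by (simp add: bu_def)
  have "cmod (mat_trace U) \<le> (\<Sum>i<d. cmod (U $$ (i,i)))"
    using U by (simp add: mat_trace_def norm_sum)
  also have "\<dots> \<le> (\<Sum>i<d. 1)" using bu_diag[OF assms] by (intro sum_mono) auto
  finally show ?thesis by simp
qed

lemma a_coef_bound: "cmod (a_coef n NH \<sigma> l) \<le> 1"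
proof -
  let ?d = "2^n :: nat"
  have S: "bu ?d (S_op n \<sigma> l)" unfolding S_op_def by (intro bu_foldl bu_pauli bu_one)
  have T: "bu ?d (T_op n NH \<sigma> l)" unfolding T_op_def by (intro bu_foldl bu_pow bu_pauli bu_one)
  have U: "bu ?d (S_op n \<sigma> l * conj_transpose (T_op n NH \<sigma> l))" by (intro bu_mult S bu_ct T)
  have tr1: "mat_trace (1\<^sub>m ?d) = of_nat ?d" by (simp add: mat_trace_def)
  show ?thesis unfolding a_coef_def tr1 using bu_trace[OF U]
    by (simp add: norm_divide norm_power)
qed



lemma pow_entry_bound:
  fixes A :: "complex mat"
  assumes A: "A \<in> carrier_mat d d" and ij: "i < d" "j < d"
  shows "cmod ((A ^\<^sub>m k) $$ (i,j)) \<le> (\<Sum>a<d. \<Sum>b<d. cmod (A $$ (a,b))) ^ k"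
  using ij(2)
proof (induction k arbitrary: j)
  case 0 thus ?case using ij A by auto
next
  case (Suc k)
  let ?s = "\<Sum>a<d. \<Sum>b<d. cmod (A $$ (a,b))"
  have "(A ^\<^sub>m Suc k) $$ (i,j) = (\<Sum>l<d. (A ^\<^sub>m k) $$ (i,l) * A $$ (l,j))"
    using A ij Suc.prems by (simp add: scalar_prod_def atLeast0LessThan)
  hence "cmod ((A ^\<^sub>m Suc k) $$ (i,j)) \<le> (\<Sum>l<d. cmod ((A ^\<^sub>m k) $$ (i,l)) * cmod (A $$ (l,j)))"
    by (simp add: norm_sum norm_mult order_trans[OF norm_sum])
  also have "\<dots> \<le> (\<Sum>l<d. ?s ^ k * cmod (A $$ (l,j)))"
    by (intro sum_mono mult_right_mono) (auto intro: Suc.IH)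
  also have "\<dots> = ?s ^ k * (\<Sum>l<d. cmod (A $$ (l,j)))" by (simp add: sum_distrib_left)
  also have "(\<Sum>l<d. cmod (A $$ (l,j))) \<le> ?s"
  proof -
    have "(\<Sum>l<d. cmod (A $$ (l,j))) \<le> (\<Sum>l<d. \<Sum>b<d. cmod (A $$ (l,b)))"
      using Suc.prems by (intro sum_mono member_le_sum) auto
    thus ?thesis .
  qed
  hence "?s ^ k * (\<Sum>l<d. cmod (A $$ (l,j))) \<le> ?s ^ k * ?s"
    by (intro mult_left_mono) (auto intro!: sum_nonneg zero_le_power)
  finally show ?case by (simp add: mult.commute)
qed

lemma exp_entry_sums:
  fixes A :: "complex mat"
  assumes A: "A \<in> carrier_mat d d" and ij: "i < d" "j < d"
  shows "(\<lambda>k. (A ^\<^sub>m k) $$ (i,j) / of_nat (fact k)) sums (mat_exp A $$ (i,j))"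
proof -
  let ?s = "\<Sum>a<d. \<Sum>b<d. cmod (A $$ (a,b))"
  have "summable (\<lambda>k. ?s ^ k / fact k)"
    using summable_exp[of ?s] by (simp add: field_simps)
  hence "summable (\<lambda>k. (A ^\<^sub>m k) $$ (i,j) / of_nat (fact k))"
  proof (rule summable_comparison_test')
    fix k :: nat
    show "norm ((A ^\<^sub>m k) $$ (i,j) / of_nat (fact k)) \<le> ?s ^ k / fact k"
      using pow_entry_bound[OF A ij, of k] by (simp add: norm_divide divide_right_mono)
  qed
  thus ?thesis using A ij by (simp add: mat_exp_def summable_sums)
qed

lemma mat_exp_dim[simp]: "dim_row (mat_exp A) = dim_row A" "dim_col (mat_exp A) = dim_col A"
  by (simp_all add: mat_exp_def)

lemma mat_exp_carrier[simp]: "A \<in> carrier_mat d d \<Longrightarrow> mat_exp A \<in> carrier_mat d d"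
  unfolding carrier_mat_def mat_exp_def by simp

lemma vinner_exp:
  fixes A :: "complex mat"
  assumes A: "A \<in> carrier_mat d d" and g: "g \<in> carrier_vec d" and x: "x \<in> carrier_vec d"
  shows "(\<lambda>k. vinner g (A ^\<^sub>m k *\<^sub>v x) / of_nat (fact k)) sums vinner g (mat_exp A *\<^sub>v x)"
proof -
  have "(\<lambda>k. \<Sum>i<d. \<Sum>j<d. cnj (g $ i) * ((A ^\<^sub>m k) $$ (i,j) / of_nat (fact k)) * x $ j)
        sums (\<Sum>i<d. \<Sum>j<d. cnj (g $ i) * mat_exp A $$ (i,j) * x $ j)"
    by (intro sums_sum sums_mult sums_mult2 exp_entry_sums[OF A]) auto
  moreover have "(\<Sum>i<d. \<Sum>j<d. cnj (g $ i) * ((A ^\<^sub>m k) $$ (i,j) / of_nat (fact k)) * x $ j)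
      = vinner g (A ^\<^sub>m k *\<^sub>v x) / of_nat (fact k)" for k
    using A g x by (simp add: vinner_def scalar_prod_def atLeast0LessThan sum_divide_distrib
          sum_distrib_left mult_ac)
  moreover have "(\<Sum>i<d. \<Sum>j<d. cnj (g $ i) * mat_exp A $$ (i,j) * x $ j) = vinner g (mat_exp A *\<^sub>v x)"
    using A g x by (simp add: vinner_def scalar_prod_def atLeast0LessThan sum_distrib_left mult_ac)
  ultimately show ?thesis by simp
qed

lemma vinner_adj:
  fixes B :: "complex mat"
  assumes B: "B \<in> carrier_mat d d" and g: "g \<in> carrier_vec d" and y: "y \<in> carrier_vec d"
  shows "vinner g (B *\<^sub>v y) = vinner (conj_transpose B *\<^sub>v g) y"
proof -
  have "vinner g (B *\<^sub>v y) = (\<Sum>i<d. \<Sum>j<d. cnj (g $ i) * B $$ (i,j) * y $ j)"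
    using B g y by (simp add: vinner_def scalar_prod_def atLeast0LessThan sum_distrib_left mult_ac)
  also have "\<dots> = (\<Sum>j<d. \<Sum>i<d. cnj (g $ i) * B $$ (i,j) * y $ j)" by (rule sum.swap)
  also have "\<dots> = vinner (conj_transpose B *\<^sub>v g) y"
    using B g y by (simp add: vinner_def scalar_prod_def atLeast0LessThan sum_distrib_right sum_distrib_left mult_ac)
  finally show ?thesis .
qed

lemma vinner_exp_ground:
  fixes A :: "complex mat"
  assumes A: "A \<in> carrier_mat d d" and herm: "conj_transpose A = A"
    and g: "g \<in> carrier_vec d" and x: "x \<in> carrier_vec d" and Ag: "A *\<^sub>v g = 0\<^sub>v d"
  shows "vinner g (mat_exp A *\<^sub>v x) = vinner g x"
proof -
  have z: "vinner g (A ^\<^sub>m k *\<^sub>v x) / of_nat (fact k) = (if k = 0 then vinner g x else 0)" for k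
  proof (cases k)
    case 0 thus ?thesis using x A by simp
  next
    case (Suc m)
    have Am: "A ^\<^sub>m m \<in> carrier_mat d d" using A by simp
    have "vinner g (A ^\<^sub>m k *\<^sub>v x) = vinner (conj_transpose (A ^\<^sub>m k) *\<^sub>v g) x"
      using A g x by (intro vinner_adj) auto
    also have "conj_transpose (A ^\<^sub>m k) = A ^\<^sub>m k" using ct_pow[OF A] herm by simp
    also have "A ^\<^sub>m k *\<^sub>v g = A ^\<^sub>m m *\<^sub>v (A *\<^sub>v g)" using Suc assoc_mult_mat_vec[OF Am A g] by simp
    also have "\<dots> = 0\<^sub>v d" using Ag Am by (intro eq_vecI) (auto simp: scalar_prod_def)
    finally show ?thesis using Suc by (simp add: vinner_def)
  qed
  have "(\<lambda>k. vinner g (A ^\<^sub>m k *\<^sub>v x) / of_nat (fact k)) sums vinner g x"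
    unfolding z using sums_single[of 0 "\<lambda>_. vinner g x"] by simp
  thus ?thesis using vinner_exp[OF A g x] sums_unique2 by blast
qed

lemma cauchy_schwarz_v:
  assumes g: "g \<in> carrier_vec d" and y: "y \<in> carrier_vec d"
  shows "(cmod (vinner g y))^2 \<le> vnorm2 g * vnorm2 y"
proof -
  have "cmod (vinner g y) \<le> (\<Sum>i<d. cmod (g $ i) * cmod (y $ i))"
    using g by (simp add: vinner_def norm_mult order_trans[OF norm_sum])
  hence "(cmod (vinner g y))^2 \<le> (\<Sum>i<d. cmod (g $ i) * cmod (y $ i))^2"
    by (intro power_mono) auto
  also have "\<dots> \<le> (\<Sum>i<d. (cmod (g $ i))^2) * (\<Sum>i<d. (cmod (y $ i))^2)"
    by (rule Cauchy_Schwarz_ineq_sum)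
  finally show ?thesis using g y by (simp add: vnorm2_def)
qed



lemma norm_prod_list_map: "norm (\<Prod>q\<leftarrow>l. f q :: complex) = (\<Prod>q\<leftarrow>l. norm (f q))"
  by (induction l) (auto simp: norm_mult)

lemma coef_bound:
  "cmod (f_coef n NH h \<sigma> t l) \<le> 2 * (\<Prod>q\<leftarrow>l. \<bar>h q\<bar> * \<bar>t\<bar>) / fact (length l)"
proof -
  have p1: "cmod (\<Prod>j\<in>{1..NH}. \<i> ^ mult_idx l j) = 1" by (simp add: prod_norm[symmetric] norm_power)
  have p2: "cmod (\<Prod>q\<leftarrow>l. - \<i> * complex_of_real (h q * t)) = (\<Prod>q\<leftarrow>l. \<bar>h q\<bar> * \<bar>t\<bar>)"
    by (simp add: norm_prod_list_map norm_mult abs_mult)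
  have p3: "cmod (a_coef n NH \<sigma> l - 1) \<le> 2"
    using a_coef_bound[of n NH \<sigma> l] norm_triangle_ineq4[of "a_coef n NH \<sigma> l" 1] by simp
  have nn: "0 \<le> (\<Prod>q\<leftarrow>l. \<bar>h q\<bar> * \<bar>t\<bar>)" by (induction l) auto
  have "cmod (f_coef n NH h \<sigma> t l) = (\<Prod>q\<leftarrow>l. \<bar>h q\<bar> * \<bar>t\<bar>) / fact (length l) * cmod (a_coef n NH \<sigma> l - 1)"
    unfolding f_coef_def norm_mult norm_divide p1 p2 by simp
  also have "\<dots> \<le> (\<Prod>q\<leftarrow>l. \<bar>h q\<bar> * \<bar>t\<bar>) / fact (length l) * 2"
    using p3 nn by (intro mult_left_mono) auto
  finally show ?thesis by (simp add: mult.commute)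
qed

lemma sum_lists_prod:
  assumes "finite A"
  shows "(\<Sum>l\<in>{xs. set xs \<subseteq> A \<and> length xs = k}. \<Prod>q\<leftarrow>l. w q) = (\<Sum>j\<in>A. w j :: real) ^ k"
proof (induction k)
  case 0
  have "{xs. set xs \<subseteq> A \<and> length xs = 0} = {[]}" by auto
  thus ?case by simp
next
  case (Suc k)
  let ?Lk = "{xs. set xs \<subseteq> A \<and> length xs = k}"
  have fin: "finite ?Lk" using finite_lists_length_eq[OF assms] .
  have "(\<Sum>l\<in>{xs. set xs \<subseteq> A \<and> length xs = Suc k}. \<Prod>q\<leftarrow>l. w q)
      = (\<Sum>p\<in>?Lk \<times> A. \<Prod>q\<leftarrow>(snd p # fst p). w q)"
    unfolding lists_length_Suc_eq
    by (subst sum.reindex) (auto simp: inj_on_def case_prod_beta intro!: sum.cong)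
  also have "\<dots> = (\<Sum>l\<in>?Lk. \<Sum>j\<in>A. w j * (\<Prod>q\<leftarrow>l. w q))"
    by (simp add: sum.cartesian_product case_prod_beta)
  also have "\<dots> = (\<Sum>j\<in>A. w j) * (\<Sum>l\<in>?Lk. \<Prod>q\<leftarrow>l. w q)"
    by (simp add: sum_distrib_left sum_distrib_right sum.swap[of _ ?Lk A])
  finally show ?case using Suc by simp
qed

lemma exp_tail_bound:
  fixes x :: real assumes x: "0 \<le> x"
  shows "(\<Sum>k\<in>{2..m+2}. x ^ k / fact k) \<le> exp x - 1 - x"
proof -
  have "(\<Sum>k\<in>{2..m+2}. x ^ k / fact k) = (\<Sum>i\<in>{0..m}. x ^ (i+2) / fact (i+2))"
    using sum.shift_bounds_cl_nat_ivl[of "\<lambda>k. x ^ k / fact k" 0 2 m] by (simp only: add_0)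
  also have "\<dots> \<le> (\<Sum>n. inverse (fact (n + 2)) *\<^sub>R (x ^ (n + 2)))"
  proof -
    have s: "summable (\<lambda>n. inverse (fact (n + 2)) *\<^sub>R (x ^ (n + 2)))"
      using summable_exp[of x] by (subst summable_iff_shift[where k=2]) (simp add: field_simps)
    show ?thesis using sum_le_suminf[OF s, of "{0..m}"] x by (simp add: field_simps)
  qed
  also have "\<dots> = exp x - 1 - x" using exp_first_two_terms[of x] by simp
  finally show ?thesis .
qed

definition Lk :: "nat \<Rightarrow> nat \<Rightarrow> nat list set" where
  "Lk NH k = {xs. set xs \<subseteq> {1..NH} \<and> length xs = k}"

lemma finite_partial_coef:
  assumes F: "finite F" "F \<subseteq> L_set NH"
  shows "(\<Sum>l\<in>F. cmod (f_coef n NH h \<sigma> t l)) \<le> 2 * (exp (htot NH h * \<bar>t\<bar>) - 1 - htot NH h * \<bar>t\<bar>)"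
proof -
  define x where "x = htot NH h * \<bar>t\<bar>"
  have x0: "0 \<le> x" by (simp add: x_def htot_def sum_nonneg)
  obtain m where m0: "\<forall>k\<in>length ` F. k \<le> m"
    using finite_nat_set_iff_bounded_le[of "length ` F"] F(1) by auto
  hence m: "\<forall>l\<in>F. length l \<le> m + 2" by auto
  have sub: "F \<subseteq> (\<Union>k\<in>{2..m+2}. Lk NH k)"
    using F(2) m by (auto simp: L_set_def Lk_def)
  have finLk: "finite (Lk NH k)" for k unfolding Lk_def by (rule finite_lists_length_eq) simp
  let ?w = "\<lambda>l. 2 * (\<Prod>q\<leftarrow>l. \<bar>h q\<bar> * \<bar>t\<bar>) / fact (length l)"
  have wnn: "0 \<le> ?w l" for l
  proof -
    have "0 \<le> (\<Prod>q\<leftarrow>l. \<bar>h q\<bar> * \<bar>t\<bar>)" by (induction l) auto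
    thus ?thesis by simp
  qed
  have "(\<Sum>l\<in>F. cmod (f_coef n NH h \<sigma> t l)) \<le> (\<Sum>l\<in>F. ?w l)"
    by (intro sum_mono coef_bound)
  also have "\<dots> \<le> (\<Sum>l\<in>(\<Union>k\<in>{2..m+2}. Lk NH k). ?w l)"
    using sub finLk wnn by (intro sum_mono2) auto
  also have "\<dots> = (\<Sum>k\<in>{2..m+2}. \<Sum>l\<in>Lk NH k. ?w l)"
    using finLk by (intro sum.UNION_disjoint) (auto simp: Lk_def)
  also have "\<dots> = (\<Sum>k\<in>{2..m+2}. 2 * (x ^ k / fact k))"
  proof (intro sum.cong refl)
    fix k
    have "(\<Sum>l\<in>Lk NH k. ?w l) = 2 / fact k * (\<Sum>l\<in>Lk NH k. \<Prod>q\<leftarrow>l. \<bar>h q\<bar> * \<bar>t\<bar>)"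
      by (simp add: sum_distrib_left Lk_def)
    also have "(\<Sum>l\<in>Lk NH k. \<Prod>q\<leftarrow>l. \<bar>h q\<bar> * \<bar>t\<bar>) = (\<Sum>j\<in>{1..NH}. \<bar>h j\<bar> * \<bar>t\<bar>) ^ k"
      unfolding Lk_def by (rule sum_lists_prod) simp
    also have "(\<Sum>j\<in>{1..NH}. \<bar>h j\<bar> * \<bar>t\<bar>) = x"
      by (simp add: x_def htot_def sum_distrib_right)
    finally show "(\<Sum>l\<in>Lk NH k. ?w l) = 2 * (x ^ k / fact k)" by simp
  qed
  also have "\<dots> = 2 * (\<Sum>k\<in>{2..m+2}. x ^ k / fact k)" by (simp add: sum_distrib_left)
  also have "\<dots> \<le> 2 * (exp x - 1 - x)" by (rule mult_left_mono[OF exp_tail_bound[OF x0]]) simp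
  finally show ?thesis by (simp add: x_def)
qed

lemma coef_summable: "(\<lambda>l. cmod (f_coef n NH h \<sigma> t l)) summable_on L_set NH"
  by (rule nonneg_bdd_above_summable_on) (auto intro!: bdd_aboveI finite_partial_coef)

lemma coef_infsum_bound:
  "(\<Sum>\<^sub>\<infinity>l\<in>L_set NH. cmod (f_coef n NH h \<sigma> t l)) \<le> 2 * (exp (htot NH h * \<bar>t\<bar>) - 1 - htot NH h * \<bar>t\<bar>)"
  by (rule infsum_le_finite_sums[OF coef_summable finite_partial_coef])




definition zpt :: "nat \<Rightarrow> (nat \<Rightarrow> real) \<Rightarrow> real \<Rightarrow> real list" where
  "zpt NH h t = map (\<lambda>j. h j * t) [1..<NH+1]"
definition Bset :: "nat \<Rightarrow> real list \<Rightarrow> nat list set" where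
  "Bset NH y = {l \<in> L_set NH. f_point NH l = y}"
definition Gv :: "nat \<Rightarrow> nat \<Rightarrow> (nat \<Rightarrow> real) \<Rightarrow> (nat \<Rightarrow> nat \<Rightarrow> nat) \<Rightarrow> real \<Rightarrow> real list \<Rightarrow> complex" where
  "Gv n NH h \<sigma> t y = infsum (f_coef n NH h \<sigma> t) (Bset NH y)"

lemma f_mass_eq: "f_mass n NH h \<sigma> t y = (if y = zpt NH h t then 1 else 0) + Gv n NH h \<sigma> t y"
proof -
  have "(\<Sum>\<^sub>\<infinity>l\<in>L_set NH. if f_point NH l = y then f_coef n NH h \<sigma> t l else 0) = Gv n NH h \<sigma> t y"
    unfolding Gv_def by (rule infsum_cong_neutral) (auto simp: Bset_def)
  thus ?thesis unfolding f_mass_def zpt_def by simp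
qed

lemma B_sub: "Bset NH y \<subseteq> L_set NH" by (auto simp: Bset_def)

lemma B_norm_summable: "(\<lambda>l. cmod (f_coef n NH h \<sigma> t l)) summable_on Bset NH y"
  by (rule summable_on_subset_banach[OF coef_summable B_sub])

lemma G_norm: "cmod (Gv n NH h \<sigma> t y) \<le> (\<Sum>\<^sub>\<infinity>l\<in>Bset NH y. cmod (f_coef n NH h \<sigma> t l))"
  unfolding Gv_def by (rule norm_infsum_bound[OF B_norm_summable])

lemma B_le_L: "(\<Sum>\<^sub>\<infinity>l\<in>A. cmod (f_coef n NH h \<sigma> t l)) \<le> (\<Sum>\<^sub>\<infinity>l\<in>L_set NH. cmod (f_coef n NH h \<sigma> t l))"
  if "A \<subseteq> L_set NH" for A
  by (rule infsum_mono_neutral[OF summable_on_subset_banach[OF coef_summable that] coef_summable]) (use that in auto)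

lemma TV_partial:
  assumes Y: "finite Y"
  shows "(\<Sum>y\<in>Y. cmod (f_mass n NH h \<sigma> t y)) \<le> 1 + (\<Sum>\<^sub>\<infinity>l\<in>L_set NH. cmod (f_coef n NH h \<sigma> t l))"
proof -
  let ?c = "\<lambda>l. cmod (f_coef n NH h \<sigma> t l)"
  have "(\<Sum>y\<in>Y. cmod (f_mass n NH h \<sigma> t y))
      \<le> (\<Sum>y\<in>Y. (if y = zpt NH h t then 1 else 0) + cmod (Gv n NH h \<sigma> t y))"
  proof (intro sum_mono)
    fix y
    show "cmod (f_mass n NH h \<sigma> t y) \<le> (if y = zpt NH h t then 1 else 0) + cmod (Gv n NH h \<sigma> t y)"
      unfolding f_mass_eq using norm_triangle_ineq[of "(if y = zpt NH h t then 1 else 0)::complex" "Gv n NH h \<sigma> t y"]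
      by (auto split: if_splits)
  qed
  also have "\<dots> = (\<Sum>y\<in>Y. (if y = zpt NH h t then 1 else 0)) + (\<Sum>y\<in>Y. cmod (Gv n NH h \<sigma> t y))"
    by (rule sum.distrib)
  also have "(\<Sum>y\<in>Y. (if y = zpt NH h t then 1 else 0)::real) \<le> 1"
    using Y by (simp add: sum.delta')
  also have "(\<Sum>y\<in>Y. cmod (Gv n NH h \<sigma> t y)) \<le> (\<Sum>y\<in>Y. \<Sum>\<^sub>\<infinity>l\<in>Bset NH y. ?c l)"
    by (intro sum_mono G_norm)
  also have "\<dots> = (\<Sum>\<^sub>\<infinity>l\<in>(\<Union>y\<in>Y. Bset NH y). ?c l)"
    by (rule sum_infsum[OF Y B_norm_summable]) (auto simp: Bset_def)
  also have "\<dots> \<le> (\<Sum>\<^sub>\<infinity>l\<in>L_set NH. ?c l)"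
    by (rule B_le_L) (auto simp: Bset_def)
  finally show ?thesis by simp
qed

lemma TV_summable: "(\<lambda>y. cmod (f_mass n NH h \<sigma> t y)) summable_on UNIV"
  by (rule nonneg_bdd_above_summable_on) (auto intro!: bdd_aboveI TV_partial)

lemma TV_upper:
  "f_TV n NH h \<sigma> t \<le> 2 * exp (htot NH h * \<bar>t\<bar>) - 1 - 2 * htot NH h * \<bar>t\<bar>"
proof -
  have "f_TV n NH h \<sigma> t \<le> 1 + (\<Sum>\<^sub>\<infinity>l\<in>L_set NH. cmod (f_coef n NH h \<sigma> t l))"
    unfolding f_TV_def by (rule infsum_le_finite_sums[OF TV_summable TV_partial])
  thus ?thesis using coef_infsum_bound[of n NH h \<sigma> t] by simp
qed

lemma TV_nonneg: "0 \<le> f_TV n NH h \<sigma> t"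
  unfolding f_TV_def by (rule infsum_nonneg) simp

lemma TV_lower:
  "1 - 2 * (exp (htot NH h * \<bar>t\<bar>) - 1 - htot NH h * \<bar>t\<bar>) \<le> f_TV n NH h \<sigma> t"
proof -
  let ?z = "zpt NH h t"
  have "cmod (f_mass n NH h \<sigma> t ?z) = (\<Sum>\<^sub>\<infinity>y\<in>{?z}. cmod (f_mass n NH h \<sigma> t y))" by simp
  also have "\<dots> \<le> f_TV n NH h \<sigma> t"
    unfolding f_TV_def by (rule infsum_mono_neutral[OF _ TV_summable]) auto
  finally have 1: "cmod (f_mass n NH h \<sigma> t ?z) \<le> f_TV n NH h \<sigma> t" .
  have "1 - cmod (Gv n NH h \<sigma> t ?z) \<le> cmod (f_mass n NH h \<sigma> t ?z)"
    unfolding f_mass_eq using norm_triangle_ineq2[of 1 "- Gv n NH h \<sigma> t ?z"] by simp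
  moreover have "cmod (Gv n NH h \<sigma> t ?z) \<le> (\<Sum>\<^sub>\<infinity>l\<in>L_set NH. cmod (f_coef n NH h \<sigma> t l))"
    using G_norm B_le_L[OF B_sub] by (rule order_trans)
  ultimately show ?thesis using 1 coef_infsum_bound[of n NH h \<sigma> t] by linarith
qed



lemma borel_measurable_infsum_countable:
  fixes F :: "'i \<Rightarrow> 'a \<Rightarrow> 'b::{banach, second_countable_topology}"
  assumes I: "countable I" and meas: "\<And>i. i \<in> I \<Longrightarrow> (\<lambda>x. F i x) \<in> borel_measurable M"
    and sm: "\<And>x. (\<lambda>i. norm (F i x)) summable_on I"
  shows "(\<lambda>x. infsum (\<lambda>i. F i x) I) \<in> borel_measurable M"
proof (cases "finite I")
  case True
  thus ?thesis using meas by simp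
next
  case False
  define e where "e = from_nat_into I"
  have bij: "bij_betw e UNIV I" unfolding e_def by (rule bij_betw_from_nat_into[OF I False])
  have eI: "e n \<in> I" for n using bij by (auto simp: bij_betw_def)
  have eq: "infsum (\<lambda>i. F i x) I = (\<Sum>n. F (e n) x)" for x
  proof -
    have "(\<lambda>n. norm (F (e n) x)) summable_on UNIV"
      using summable_on_reindex_bij_betw[OF bij, of "\<lambda>i. norm (F i x)"] sm by simp
    hence s: "(\<lambda>n. F (e n) x) summable_on UNIV" by (rule abs_summable_summable)
    have "infsum (\<lambda>i. F i x) I = infsum (\<lambda>n. F (e n) x) UNIV"
      using infsum_reindex_bij_betw[OF bij, of "\<lambda>i. F i x"] by simp
    also have "\<dots> = (\<Sum>n. F (e n) x)"
      using has_sum_imp_sums[OF s[unfolded summable_iff_has_sum_infsum]] by (simp add: sums_iff)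
    finally show ?thesis .
  qed
  have "(\<lambda>x. \<Sum>n. F (e n) x) \<in> borel_measurable M"
    by (rule borel_measurable_suminf) (rule meas[OF eI])
  thus ?thesis by (simp add: eq)
qed


lemma countable_L: "countable (L_set NH)"
  by (rule countable_subset[OF subset_UNIV]) simp

lemma prod_meas: "(\<lambda>t::real. \<Prod>q\<leftarrow>l. - \<i> * complex_of_real (h q * t)) \<in> borel_measurable borel"
proof (induction l)
  case Nil thus ?case by simp
next
  case (Cons a l)
  have "(\<lambda>t::real. - \<i> * complex_of_real (h a * t)) \<in> borel_measurable borel" by measurable
  from borel_measurable_times[OF this Cons.IH] show ?case by simp
qed

lemma coef_meas: "(\<lambda>t. f_coef n NH h \<sigma> t l) \<in> borel_measurable borel"
  unfolding f_coef_def
  by (intro borel_measurable_times borel_measurable_divide prod_meas) auto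

lemma G_meas: "(\<lambda>t. Gv n NH h \<sigma> t y) \<in> borel_measurable borel"
  unfolding Gv_def
  by (rule borel_measurable_infsum_countable[where F="\<lambda>l t. f_coef n NH h \<sigma> t l"])
     (auto intro: countable_subset[OF B_sub countable_L] coef_meas B_norm_summable)

lemma zset_borel: "{t. zpt NH h t = y} \<in> sets borel"
proof (cases "\<forall>j\<in>{1..NH}. h j = 0")
  case True
  hence "zpt NH h t = map (\<lambda>j. 0) [1..<NH+1]" for t unfolding zpt_def by (intro map_cong) auto
  hence "{t. zpt NH h t = y} = UNIV \<or> {t. zpt NH h t = y} = {}" by auto
  thus ?thesis by auto
next
  case False
  then obtain j where j: "j \<in> {1..NH}" "h j \<noteq> 0" by auto
  have "zpt NH h t ! (j - 1) = h j * t" for t using j(1) unfolding zpt_def by (auto simp: nth_map nth_upt simp del: upt_Suc)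
  hence "{t. zpt NH h t = y} \<subseteq> {y ! (j - 1) / h j}" using j(2) by (auto simp: field_simps)
  hence "finite {t. zpt NH h t = y}" by (rule finite_subset) simp
  thus ?thesis by (intro borel_closed finite_imp_closed)
qed

lemma fmass_meas: "(\<lambda>t. f_mass n NH h \<sigma> t y) \<in> borel_measurable borel"
proof -
  have "(\<lambda>t. (if y = zpt NH h t then 1 else 0)::complex) = indicator {t. zpt NH h t = y}"
    by (auto simp: indicator_def)
  hence "(\<lambda>t. (if y = zpt NH h t then 1 else 0)::complex) \<in> borel_measurable borel"
    using borel_measurable_indicator[OF zset_borel] by metis
  from borel_measurable_add[OF this G_meas] show ?thesis unfolding f_mass_eq .
qed

lemma TV_decomp:
  "f_TV n NH h \<sigma> t = (\<Sum>\<^sub>\<infinity>y\<in>f_point NH ` L_set NH. cmod (f_mass n NH h \<sigma> t y))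
     + (if zpt NH h t \<in> f_point NH ` L_set NH then 0 else 1)"
proof -
  let ?S = "f_point NH ` L_set NH"
  let ?z = "zpt NH h t"
  have G0: "Gv n NH h \<sigma> t y = 0" if "y \<notin> ?S" for y
  proof -
    have "Bset NH y = {}" using that by (auto simp: Bset_def)
    thus ?thesis by (simp add: Gv_def)
  qed
  have "f_TV n NH h \<sigma> t = (\<Sum>\<^sub>\<infinity>y\<in>insert ?z ?S. cmod (f_mass n NH h \<sigma> t y))"
    unfolding f_TV_def by (rule infsum_cong_neutral) (auto simp: f_mass_eq G0)
  also have "\<dots> = (\<Sum>\<^sub>\<infinity>y\<in>?S. cmod (f_mass n NH h \<sigma> t y)) + (if ?z \<in> ?S then 0 else 1)"
  proof (cases "?z \<in> ?S")
    case True thus ?thesis by (simp add: insert_absorb)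
  next
    case False
    have "(\<Sum>\<^sub>\<infinity>y\<in>insert ?z ?S. cmod (f_mass n NH h \<sigma> t y))
        = cmod (f_mass n NH h \<sigma> t ?z) + (\<Sum>\<^sub>\<infinity>y\<in>?S. cmod (f_mass n NH h \<sigma> t y))"
      by (rule infsum_insert[OF summable_on_subset_banach[OF TV_summable subset_UNIV] False])
    moreover have "f_mass n NH h \<sigma> t ?z = 1" using False by (simp add: f_mass_eq G0)
    ultimately show ?thesis using False by simp
  qed
  finally show ?thesis .
qed

lemma TV_meas: "(\<lambda>t. f_TV n NH h \<sigma> t) \<in> borel_measurable borel"
proof -
  let ?S = "f_point NH ` L_set NH"
  have cS: "countable ?S" using countable_L by simp
  have m: "(\<lambda>t. cmod (f_mass n NH h \<sigma> t y)) \<in> borel_measurable borel" for y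
    by (rule measurable_compose[OF fmass_meas borel_measurable_norm])
  have s: "(\<lambda>y. norm (cmod (f_mass n NH h \<sigma> t y))) summable_on ?S" for t
    using summable_on_subset_banach[OF TV_summable subset_UNIV] by simp
  have 1: "(\<lambda>t. \<Sum>\<^sub>\<infinity>y\<in>?S. cmod (f_mass n NH h \<sigma> t y)) \<in> borel_measurable borel"
    by (rule borel_measurable_infsum_countable[OF cS]) (rule m, rule s)
  have "{t. zpt NH h t \<in> ?S} = (\<Union>y\<in>?S. {t. zpt NH h t = y})" by blast
  also have "\<dots> \<in> sets borel" by (rule sets.countable_UN'[OF cS]) (use zset_borel in blast)
  finally have Z: "{t. zpt NH h t \<in> ?S} \<in> sets borel" .
  have "(\<lambda>t. (if zpt NH h t \<in> ?S then 0 else 1)::real) = (\<lambda>t. 1 - indicator {t. zpt NH h t \<in> ?S} t)"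
    by (rule ext) (simp add: indicator_def)
  moreover have "(\<lambda>t. 1 - indicator {t. zpt NH h t \<in> ?S} t :: real) \<in> borel_measurable borel"
    by (rule borel_measurable_diff) (simp, rule borel_measurable_indicator[OF Z])
  ultimately have 2: "(\<lambda>t. (if zpt NH h t \<in> ?S then 0 else 1)::real) \<in> borel_measurable borel" by simp
  from borel_measurable_add[OF 1 2] show ?thesis unfolding TV_decomp[abs_def] .
qed

lemma htot_nonneg: "0 \<le> htot NH h" by (simp add: htot_def sum_nonneg)

lemma C_bounds:
  fixes NT n NH :: nat and \<tau> :: real and h :: "nat \<Rightarrow> real" and \<sigma> :: "nat \<Rightarrow> nat \<Rightarrow> nat"
  assumes NT: "1 \<le> NT" and tau: "0 < \<tau>"
  defines "C \<equiv> (LINT t|lborel. exp (- (real NT^2 * t^2) / (2 * \<tau>^2)) * (f_TV n NH h \<sigma> t) ^ NT)"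
  defines "c \<equiv> (LINT u|lborel. exp (- (u^2) / 2) *
              (2 * exp (htot NH h * \<tau> / real NT * \<bar>u\<bar>) - 1 - 2 * (htot NH h * \<tau> / real NT) * \<bar>u\<bar>) ^ NT)"
  shows "0 < C" "C \<le> \<tau> / real NT * c"
proof -
  define Ht where "Ht = htot NH h"
  have Ht0: "0 \<le> Ht" by (simp add: Ht_def htot_nonneg)
  define a where "a = Ht * \<tau> / real NT"
  have a0: "0 \<le> a" using Ht0 tau by (simp add: a_def)
  have NT0: "0 < real NT" using NT by simp
  define B where "B t = exp (- (real NT^2 * t^2) / (2 * \<tau>^2)) * (2 * exp (Ht * \<bar>t\<bar>) - 1 - 2 * Ht * \<bar>t\<bar>) ^ NT" for t
  define cf where "cf u = exp (-(u^2)/2) * (2 * exp (a * \<bar>u\<bar>) - 1 - 2 * a * \<bar>u\<bar>) ^ NT" for u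
  define g where "g t = exp (- (real NT^2 * t^2) / (2 * \<tau>^2)) * (f_TV n NH h \<sigma> t) ^ NT" for t
  have c_eq: "c = integral\<^sup>L lborel cf" unfolding c_def cf_def a_def Ht_def by simp
  have C_eq: "C = integral\<^sup>L lborel g" unfolding C_def g_def by simp
  have Baff: "B (0 + (\<tau> / real NT) * u) = cf u" for u
  proof -
    have e1: "- (real NT^2 * (0 + \<tau> / real NT * u)^2) / (2 * \<tau>^2) = -(u^2)/2"
      using NT0 tau by (simp add: field_simps power2_eq_square)
    have e2: "Ht * \<bar>0 + \<tau> / real NT * u\<bar> = a * \<bar>u\<bar>"
      using NT0 tau by (simp add: a_def abs_mult)
    have e3: "2 * Ht * \<bar>0 + \<tau> / real NT * u\<bar> = 2 * a * \<bar>u\<bar>"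
      using e2 by (simp add: mult.assoc)
    show ?thesis unfolding B_def cf_def e1 e2 e3 ..
  qed
  have cfi: "integrable lborel cf" unfolding cf_def by (rule cf_integrable[OF a0])
  have cne: "\<tau> / real NT \<noteq> 0" using tau NT0 by simp
  have Bi: "integrable lborel B"
    using lborel_integrable_real_affine_iff[OF cne, of B 0] cfi Baff by simp
  have intB: "integral\<^sup>L lborel B = \<tau> / real NT * c"
    using lborel_integral_real_affine[OF cne, of B 0] Baff tau NT0 c_eq by simp
  have gm: "g \<in> borel_measurable lborel" unfolding g_def using TV_meas[of n NH h \<sigma>] by measurable
  have gB: "g t \<le> B t" "0 \<le> g t" for t
  proof -
    have "f_TV n NH h \<sigma> t ^ NT \<le> (2 * exp (Ht * \<bar>t\<bar>) - 1 - 2 * Ht * \<bar>t\<bar>) ^ NT"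
      using TV_upper[of n NH h \<sigma> t] TV_nonneg[of n NH h \<sigma> t] unfolding Ht_def by (intro power_mono) auto
    thus "g t \<le> B t" unfolding g_def B_def by (intro mult_left_mono) auto
    show "0 \<le> g t" unfolding g_def using TV_nonneg[of n NH h \<sigma> t] by simp
  qed
  have gi: "integrable lborel g"
  proof (rule Bochner_Integration.integrable_bound[OF Bi gm])
    show "AE x in lborel. norm (g x) \<le> norm (B x)"
    proof (intro AE_I2)
      fix x
      show "norm (g x) \<le> norm (B x)" using gB(1)[of x] gB(2)[of x] by simp
    qed
  qed
  show "C \<le> \<tau> / real NT * c" unfolding C_eq intB[symmetric] using gB by (intro integral_mono[OF gi Bi]) auto
  define \<delta> where "\<delta> = 1 / (2 * (Ht + 1))"
  have \<delta>0: "0 < \<delta>" using Ht0 by (simp add: \<delta>_def)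
  define \<epsilon> where "\<epsilon> = exp (- (real NT^2 * \<delta>^2) / (2 * \<tau>^2)) * (1/2) ^ NT"
  have \<epsilon>0: "0 < \<epsilon>" by (simp add: \<epsilon>_def)
  have low: "\<epsilon> * indicator {-\<delta>..\<delta>} t \<le> g t" for t
  proof (cases "t \<in> {-\<delta>..\<delta>}")
    case False thus ?thesis using gB(2)[of t] by simp
  next
    case True
    hence at: "\<bar>t\<bar> \<le> \<delta>" by auto
    define x where "x = Ht * \<bar>t\<bar>"
    have x0: "0 \<le> x" using Ht0 by (simp add: x_def)
    have "x \<le> Ht * \<delta>" using at Ht0 by (simp add: x_def mult_left_mono)
    also have "Ht * \<delta> \<le> 1/2" using Ht0 by (simp add: \<delta>_def field_simps)
    finally have x1: "x \<le> 1/2" .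
    have "exp x \<le> 1 + x + x^2" using exp_bound[OF x0] x1 by simp
    moreover have "x^2 \<le> (1/2)^2" by (rule power_mono[OF x1 x0])
    hence "x^2 \<le> 1/4" by (simp add: power_divide)
    ultimately have "1/2 \<le> 1 - 2 * (exp x - 1 - x)" by (simp add: algebra_simps)
    hence tv: "1/2 \<le> f_TV n NH h \<sigma> t" using TV_lower[of NH h t n \<sigma>] unfolding x_def Ht_def by linarith
    have "\<bar>t\<bar>^2 \<le> \<delta>^2" by (rule power_mono[OF at abs_ge_zero])
    hence "t^2 \<le> \<delta>^2" by simp
    hence e: "exp (- (real NT^2 * \<delta>^2) / (2 * \<tau>^2)) \<le> exp (- (real NT^2 * t^2) / (2 * \<tau>^2))"
      using tau by (simp add: divide_right_mono mult_left_mono)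
    have "(1/2::real) ^ NT \<le> f_TV n NH h \<sigma> t ^ NT" using tv by (intro power_mono) auto
    hence "\<epsilon> \<le> g t" unfolding \<epsilon>_def g_def using e by (intro mult_mono) auto
    thus ?thesis using True by simp
  qed
  have ii: "integrable lborel (\<lambda>t. \<epsilon> * indicator {-\<delta>..\<delta>} t :: real)"
    using \<delta>0 by (intro integrable_mult_right integrable_real_indicator) auto
  have "(LINT t|lborel. \<epsilon> * indicator {-\<delta>..\<delta>} t) \<le> integral\<^sup>L lborel g"
    by (rule integral_mono[OF ii gi]) (use low in auto)
  moreover have "(LINT t|lborel. \<epsilon> * indicator {-\<delta>..\<delta>} t) = \<epsilon> * (2 * \<delta>)"
    using \<delta>0 by (simp add: measure_def)
  moreover have "0 < \<epsilon> * (2 * \<delta>)" using \<epsilon>0 \<delta>0 by simp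
  ultimately show "0 < C" unfolding C_eq by linarith
qed

lemma vinner_smult: "v \<in> carrier_vec (dim_vec g) \<Longrightarrow> vinner g (c \<cdot>\<^sub>v v) = c * vinner g v"
  by (simp add: vinner_def sum_distrib_left mult_ac)

lemma smult_mat_vec: "M \<in> carrier_mat d d \<Longrightarrow> v \<in> carrier_vec d \<Longrightarrow> (c \<cdot>\<^sub>m M) *\<^sub>v v = c \<cdot>\<^sub>v (M *\<^sub>v v)"
  by (intro eq_vecI) (auto simp: scalar_prod_def sum_distrib_left mult_ac)

lemma psi_part:
  fixes H :: "complex mat" and E :: real and \<Psi>g \<Psi>0 :: "complex vec" and r s :: real
  assumes H: "H \<in> carrier_mat d d" and Hh: "conj_transpose H = H"
    and ev: "eigenvector H \<Psi>g (complex_of_real E)" and ng: "vnorm2 \<Psi>g = 1"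
    and x: "\<Psi>0 \<in> carrier_vec d"
  shows "vnorm2 (complex_of_real s \<cdot>\<^sub>v (mat_exp (complex_of_real r \<cdot>\<^sub>m
                    ((H - (complex_of_real E \<cdot>\<^sub>m 1\<^sub>m d)) * (H - (complex_of_real E \<cdot>\<^sub>m 1\<^sub>m d))))
                   *\<^sub>v \<Psi>0)) \<ge> s^2 * (cmod (vinner \<Psi>g \<Psi>0))^2"
proof -
  define K where "K = H - (complex_of_real E \<cdot>\<^sub>m 1\<^sub>m d)"
  define A where "A = complex_of_real r \<cdot>\<^sub>m (K * K)"
  have Ec: "complex_of_real E \<cdot>\<^sub>m 1\<^sub>m d \<in> carrier_mat d d" by simp
  have K: "K \<in> carrier_mat d d" unfolding K_def using H Ec by (intro minus_carrier_mat) auto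
  have A: "A \<in> carrier_mat d d" unfolding A_def using K by simp
  have Kh: "conj_transpose K = K"
    unfolding K_def ct_minus[OF H Ec] Hh ct_smult by simp
  have Ah: "conj_transpose A = A"
    unfolding A_def ct_smult ct_mult[OF K K] Kh by simp
  have g: "\<Psi>g \<in> carrier_vec d" and Hg: "H *\<^sub>v \<Psi>g = complex_of_real E \<cdot>\<^sub>v \<Psi>g"
    using ev H unfolding eigenvector_def by auto
  have Kg: "K *\<^sub>v \<Psi>g = 0\<^sub>v d"
  proof -
    have "K *\<^sub>v \<Psi>g = H *\<^sub>v \<Psi>g - (complex_of_real E \<cdot>\<^sub>m 1\<^sub>m d) *\<^sub>v \<Psi>g"
      unfolding K_def by (rule minus_mult_distrib_mat_vec[OF H Ec g])
    also have "(complex_of_real E \<cdot>\<^sub>m 1\<^sub>m d) *\<^sub>v \<Psi>g = complex_of_real E \<cdot>\<^sub>v \<Psi>g"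
      using smult_mat_vec[OF one_carrier_mat g] g by simp
    finally show ?thesis using Hg g by auto
  qed
  have Ag: "A *\<^sub>v \<Psi>g = 0\<^sub>v d"
  proof -
    have "A *\<^sub>v \<Psi>g = complex_of_real r \<cdot>\<^sub>v ((K * K) *\<^sub>v \<Psi>g)"
      unfolding A_def by (rule smult_mat_vec[OF mult_carrier_mat[OF K K] g])
    also have "(K * K) *\<^sub>v \<Psi>g = K *\<^sub>v (K *\<^sub>v \<Psi>g)" by (rule assoc_mult_mat_vec[OF K K g])
    finally show ?thesis using Kg K by (auto intro!: eq_vecI simp: scalar_prod_def)
  qed
  have ex: "mat_exp A *\<^sub>v \<Psi>0 \<in> carrier_vec d" by (rule mult_mat_vec_carrier[OF mat_exp_carrier[OF A] x])
  define \<psi> where "\<psi> = complex_of_real s \<cdot>\<^sub>v (mat_exp A *\<^sub>v \<Psi>0)"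
  have psi: "\<psi> \<in> carrier_vec d" unfolding \<psi>_def using ex by simp
  have dg: "dim_vec \<Psi>g = d" using g by simp
  have "vinner \<Psi>g \<psi> = complex_of_real s * vinner \<Psi>g (mat_exp A *\<^sub>v \<Psi>0)"
    unfolding \<psi>_def using ex dg by (intro vinner_smult) simp
  also have "vinner \<Psi>g (mat_exp A *\<^sub>v \<Psi>0) = vinner \<Psi>g \<Psi>0"
    by (rule vinner_exp_ground[OF A Ah g x Ag])
  finally have "(cmod (vinner \<Psi>g \<psi>))^2 = s^2 * (cmod (vinner \<Psi>g \<Psi>0))^2"
    by (simp add: norm_mult power_mult_distrib)
  moreover have "(cmod (vinner \<Psi>g \<psi>))^2 \<le> vnorm2 \<psi>"
    using cauchy_schwarz_v[OF g psi] ng by simp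
  ultimately show ?thesis unfolding \<psi>_def A_def K_def by simp
qed

theorem lemma2:
  fixes n NH NT :: nat and h :: "nat \<Rightarrow> real" and \<sigma> :: "nat \<Rightarrow> nat \<Rightarrow> nat"
    and \<tau> Eg :: real and \<Psi>g \<Psi>0 :: "complex vec"
  defines "H \<equiv> hamiltonian n NH h \<sigma>"
  defines "C \<equiv> (LINT t|lborel. exp (- (real NT^2 * t^2) / (2 * \<tau>^2)) * (f_TV n NH h \<sigma> t) ^ NT)"
  defines "\<psi> \<equiv> complex_of_real (\<tau> * sqrt (2*pi) / (C * real NT))
              \<cdot>\<^sub>v (mat_exp (complex_of_real (- (\<tau>^2) / 2) \<cdot>\<^sub>m
                    ((H - (complex_of_real Eg \<cdot>\<^sub>m 1\<^sub>m (2^n))) * (H - (complex_of_real Eg \<cdot>\<^sub>m 1\<^sub>m (2^n)))))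
                   *\<^sub>v \<Psi>0)"
  defines "c \<equiv> (LINT u|lborel. exp (- (u^2) / 2) *
              (2 * exp (htot NH h * \<tau> / real NT * \<bar>u\<bar>) - 1 - 2 * (htot NH h * \<tau> / real NT) * \<bar>u\<bar>) ^ NT)"
  assumes pauli: "\<forall>j\<in>{1..NH}. \<forall>q<n. \<sigma> j q < 4"
    and NT: "1 \<le> NT" and tau: "0 < \<tau>"
    and ground: "eigenvector H \<Psi>g (complex_of_real Eg)"
    and minimal: "\<forall>e. eigenvalue H e \<longrightarrow> Eg \<le> Re e"
    and norm_g: "vnorm2 \<Psi>g = 1"
    and psi0: "\<Psi>0 \<in> carrier_vec (2^n)" and norm_0: "vnorm2 \<Psi>0 = 1"
  shows "vnorm2 \<psi> \<ge> 2 * pi * (cmod (vinner \<Psi>g \<Psi>0))^2 / c^2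
         \<and> (real NT > 4 * (htot NH h)^2 * \<tau>^2 \<longrightarrow>
              c \<le> sqrt (2 * pi / (1 - 4 * (htot NH h)^2 * \<tau>^2 / real NT)))"
proof
  have Cpos: "0 < C" and Cle: "C \<le> \<tau> / real NT * c"
    using C_bounds[OF NT tau, of n NH h \<sigma>] unfolding C_def c_def by auto
  have NT0: "0 < real NT" using NT by simp
  define s where "s = \<tau> * sqrt (2*pi) / (C * real NT)"
  define p where "p = (cmod (vinner \<Psi>g \<Psi>0))^2"
  have p0: "0 \<le> p" by (simp add: p_def)
  have main: "vnorm2 \<psi> \<ge> s^2 * p"
    unfolding \<psi>_def s_def p_def H_def
    by (rule psi_part[OF ham_carrier ham_herm ground[unfolded H_def] norm_g psi0])
  have cpos: "0 < c" and cC: "C * real NT / \<tau> \<le> c"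
  proof -
    have "C * real NT / \<tau> \<le> \<tau> / real NT * c * real NT / \<tau>"
      using Cle NT0 tau by (intro divide_right_mono mult_right_mono) auto
    also have "\<dots> = c" using NT0 tau by (simp add: field_simps)
    finally show "C * real NT / \<tau> \<le> c" .
    moreover have "0 < C * real NT / \<tau>" using Cpos NT0 tau by simp
    ultimately show "0 < c" by linarith
  qed
  have q: "0 < C * real NT / \<tau>" using Cpos NT0 tau by simp
  have "(C * real NT / \<tau>)^2 \<le> c^2" by (rule power_mono[OF cC]) (use q in linarith)
  moreover have "0 < c^2 * (C * real NT / \<tau>)^2" using q cpos by (intro mult_pos_pos zero_less_power)
  ultimately have "1 / c^2 \<le> 1 / (C * real NT / \<tau>)^2" by (intro divide_left_mono) auto
  also have "1 / (C * real NT / \<tau>)^2 = \<tau>^2 / (C * real NT)^2" by (simp add: power_divide)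
  finally have "2 * pi * p * (1 / c^2) \<le> 2 * pi * p * (\<tau>^2 / (C * real NT)^2)"
    using p0 by (intro mult_left_mono) auto
  also have "2 * pi * p * (\<tau>^2 / (C * real NT)^2) = s^2 * p"
    unfolding s_def by (simp add: power_divide power_mult_distrib)
  finally show "vnorm2 \<psi> \<ge> 2 * pi * (cmod (vinner \<Psi>g \<Psi>0))^2 / c^2"
    using main unfolding p_def by simp
next
  show "real NT > 4 * (htot NH h)^2 * \<tau>^2 \<longrightarrow>
              c \<le> sqrt (2 * pi / (1 - 4 * (htot NH h)^2 * \<tau>^2 / real NT))"
  proof
    assume big: "real NT > 4 * (htot NH h)^2 * \<tau>^2"
    have NT0: "0 < real NT" using NT by simp
    define a where "a = htot NH h * \<tau> / real NT"
    have a0: "0 \<le> a" using htot_nonneg[of NH h] tau NT0 by (simp add: a_def)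
    have ka: "4 * real NT * a^2 = 4 * (htot NH h)^2 * \<tau>^2 / real NT"
      using NT0 by (simp add: a_def power_divide power_mult_distrib field_simps power2_eq_square)
    have k: "4 * real NT * a^2 < 1" unfolding ka using big NT0 by simp
    have "c \<le> sqrt (2 * pi / (1 - 4 * real NT * a^2))"
      unfolding c_def a_def[symmetric] by (rule c_bound[OF a0 k])
    thus "c \<le> sqrt (2 * pi / (1 - 4 * (htot NH h)^2 * \<tau>^2 / real NT))" unfolding ka .
  qed
qed


end
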